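(* Pruned multiplication is an associative operation on $T^1(\Sigma)$. The unary operations $*$ and $+$ on $T^1(\Sigma)$ are idempotent, and the subsemigroup of $T^1(\Sigma)$ generated by their images is commutative.
   Context: Let $\Sigma$ be a set. A $\Sigma$-tree is a finite directed graph whose underlying undirected graph is a tree, edges labelled by elements of $\Sigma$, with distinguished start and end vertices such that there is a (possibly empty) directed path from start to end vertex. A morphism $X\to Y$ maps vertices to vertices and edges to edges, preserving initial vertex, terminal vertex and label of each edge, and mapping start/end vertex to start/end vertex; isomorphisms are morphisms bijective on vertices and edges. A retraction is an idempotent morphism $X\to X$, its image a retract; $X$ is pruned if it admits no non-identity retraction. Every tree $X$ has a pruned retract, unique up to isomorphism, whose isomorphism type is $\overline{X}$. $T^1(\Sigma)$ is the set of isomorphism types of pruned $\Sigma$-trees. Unpruned operations: $X\times Y$ identifies the end vertex of (a copy of) $X$ with the start vertex of (a disjoint copy of) $Y$, start vertex that of $X$, end vertex that of $Y$; $X^{(+)}$ is $X$ with end vertex moved to the start vertex; $X^{( * )}$ is $X$ with start vertex moved to the end vertex. Pruned operations on $T^1(\Sigma)$: $XY=\overline{X\times Y}$, $X^+=\overline{X^{(+)}}$, $X^*=\overline{X^{( * )}}$. *)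

theory Defs
  imports Main
begin

text \<open>Vertices are natural numbers (every finite tree has an isomorphic
copy of this form); an edge is a triple (initial vertex, label, terminal vertex).
Since the underlying undirected graph is a tree there are no parallel edges, so
edges are determined by such triples.\<close>

record 's stree =
  verts :: "nat set"
  arcs  :: "(nat \<times> 's \<times> nat) set"
  st    :: nat
  en    :: nat

definition dedges :: "'s stree \<Rightarrow> (nat \<times> nat) set" where
  "dedges X = {(u, v). \<exists>a. (u, a, v) \<in> arcs X}"

definition uedges :: "'s stree \<Rightarrow> (nat \<times> nat) set" where
  "uedges X = dedges X \<union> (dedges X)\<inverse>"

definition sigma_tree :: "'s set \<Rightarrow> 's stree \<Rightarrow> bool" where
  "sigma_tree Sig X \<longleftrightarrow>
     finite (verts X) \<and> finite (arcs X) \<and>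
     (\<forall>(u, a, v) \<in> arcs X. u \<in> verts X \<and> a \<in> Sig \<and> v \<in> verts X) \<and>
     (\<forall>u \<in> verts X. \<forall>v \<in> verts X. (u, v) \<in> (uedges X)\<^sup>*) \<and>
     card (arcs X) + 1 = card (verts X) \<and>
     st X \<in> verts X \<and> en X \<in> verts X \<and>
     (st X, en X) \<in> (dedges X)\<^sup>*"

definition emap :: "(nat \<Rightarrow> nat) \<Rightarrow> nat \<times> 's \<times> nat \<Rightarrow> nat \<times> 's \<times> nat" where
  "emap f = (\<lambda>(u, a, v). (f u, a, f v))"

definition morphism :: "'s stree \<Rightarrow> 's stree \<Rightarrow> (nat \<Rightarrow> nat) \<Rightarrow> bool" where
  "morphism X Y f \<longleftrightarrow>
     (\<forall>v \<in> verts X. f v \<in> verts Y) \<and>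
     (\<forall>e \<in> arcs X. emap f e \<in> arcs Y) \<and>
     f (st X) = st Y \<and> f (en X) = en Y"

definition iso :: "'s stree \<Rightarrow> 's stree \<Rightarrow> (nat \<Rightarrow> nat) \<Rightarrow> bool" where
  "iso X Y f \<longleftrightarrow> morphism X Y f \<and> bij_betw f (verts X) (verts Y) \<and>
     bij_betw (emap f) (arcs X) (arcs Y)"

definition isomorphic :: "'s stree \<Rightarrow> 's stree \<Rightarrow> bool" where
  "isomorphic X Y \<longleftrightarrow> (\<exists>f. iso X Y f)"

definition retraction :: "'s stree \<Rightarrow> (nat \<Rightarrow> nat) \<Rightarrow> bool" where
  "retraction X f \<longleftrightarrow> morphism X X f \<and> (\<forall>v \<in> verts X. f (f v) = f v)"

definition img :: "'s stree \<Rightarrow> (nat \<Rightarrow> nat) \<Rightarrow> 's stree" where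
  "img X f = \<lparr>verts = f ` verts X, arcs = emap f ` arcs X, st = f (st X), en = f (en X)\<rparr>"

definition retract_of :: "'s stree \<Rightarrow> 's stree \<Rightarrow> bool" where
  "retract_of R X \<longleftrightarrow> (\<exists>f. retraction X f \<and> R = img X f)"

definition pruned :: "'s stree \<Rightarrow> bool" where
  "pruned X \<longleftrightarrow> (\<forall>f. retraction X f \<longrightarrow> (\<forall>v \<in> verts X. f v = v))"

definition prune :: "'s stree \<Rightarrow> 's stree" where
  "prune X = (SOME R. retract_of R X \<and> pruned R)"

definition iso_type :: "'s set \<Rightarrow> 's stree \<Rightarrow> 's stree set" where
  "iso_type Sig X = {Y. sigma_tree Sig Y \<and> isomorphic X Y}"

definition T1 :: "'s set \<Rightarrow> 's stree set set" where
  "T1 Sig = {iso_type Sig X | X. sigma_tree Sig X \<and> pruned X}"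

definition rep :: "'s stree set \<Rightarrow> 's stree" where
  "rep A = (SOME X. X \<in> A)"

text \<open>Unpruned operations. In the product, X is copied to even numbers, Y to odd
numbers, except that the start vertex of Y is identified with the end vertex of X.\<close>
definition tprod :: "'s stree \<Rightarrow> 's stree \<Rightarrow> 's stree" where
  "tprod X Y = (let g = (\<lambda>v. 2 * v);
                    h = (\<lambda>v. if v = st Y then 2 * en X else 2 * v + 1)
                in \<lparr>verts = g ` verts X \<union> h ` verts Y,
                    arcs = emap g ` arcs X \<union> emap h ` arcs Y,
                    st = g (st X), en = h (en Y)\<rparr>)"

definition tplus :: "'s stree \<Rightarrow> 's stree" where
  "tplus X = X\<lparr>en := st X\<rparr>"

definition tstar :: "'s stree \<Rightarrow> 's stree" where
  "tstar X = X\<lparr>st := en X\<rparr>"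

definition pmult :: "'s set \<Rightarrow> 's stree set \<Rightarrow> 's stree set \<Rightarrow> 's stree set" where
  "pmult Sig A B = iso_type Sig (prune (tprod (rep A) (rep B)))"

definition pplus :: "'s set \<Rightarrow> 's stree set \<Rightarrow> 's stree set" where
  "pplus Sig A = iso_type Sig (prune (tplus (rep A)))"

definition pstar :: "'s set \<Rightarrow> 's stree set \<Rightarrow> 's stree set" where
  "pstar Sig A = iso_type Sig (prune (tstar (rep A)))"

inductive_set gen_starplus :: "'s set \<Rightarrow> 's stree set set" for Sig where
  gen_star: "A \<in> T1 Sig \<Longrightarrow> pstar Sig A \<in> gen_starplus Sig"
| gen_plus: "A \<in> T1 Sig \<Longrightarrow> pplus Sig A \<in> gen_starplus Sig"
| gen_mult: "a \<in> gen_starplus Sig \<Longrightarrow> b \<in> gen_starplus Sig \<Longrightarrow> pmult Sig a b \<in> gen_starplus Sig"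

end

theory Submission
  imports Defs
begin

lemma emap_simp[simp]: "emap f (u, a, v) = (f u, a, f v)"
  by (simp add: emap_def)

lemma emap_comp: "emap (g \<circ> f) = emap g \<circ> emap f"
  by (auto simp: emap_def fun_eq_iff)

lemma emap_id[simp]: "emap id = id" "emap (\<lambda>x. x) = id"
  by (auto simp: emap_def fun_eq_iff)

definition pmor :: "'s stree \<Rightarrow> 's stree \<Rightarrow> (nat \<Rightarrow> nat) \<Rightarrow> bool" where
  "pmor X Y f \<longleftrightarrow> (\<forall>v \<in> verts X. f v \<in> verts Y) \<and> (\<forall>e \<in> arcs X. emap f e \<in> arcs Y)"

lemma morphism_pmor: "morphism X Y f \<longleftrightarrow> pmor X Y f \<and> f (st X) = st Y \<and> f (en X) = en Y"
  by (auto simp: morphism_def pmor_def)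

lemma pmor_comp: "pmor X Y f \<Longrightarrow> pmor Y Z g \<Longrightarrow> pmor X Z (g \<circ> f)"
  by (auto simp: pmor_def emap_comp)

lemma morphism_comp: "morphism X Y f \<Longrightarrow> morphism Y Z g \<Longrightarrow> morphism X Z (g \<circ> f)"
  by (auto simp: morphism_pmor pmor_comp)

lemma uedges_map:
  assumes "\<forall>e \<in> arcs X. emap f e \<in> arcs Y" "(u, v) \<in> (uedges X)\<^sup>*"
  shows "(f u, f v) \<in> (uedges Y)\<^sup>*"
  using assms(2)
proof (induction rule: rtrancl_induct)
  case base then show ?case by simp
next
  case (step y z)
  have "(f y, f z) \<in> uedges Y"
    using step(2) assms(1) by (fastforce simp: uedges_def dedges_def)
  then show ?case using step(3) by (meson rtrancl.rtrancl_into_rtrancl)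
qed

lemma dedges_map:
  assumes "\<forall>e \<in> arcs X. emap f e \<in> arcs Y" "(u, v) \<in> (dedges X)\<^sup>*"
  shows "(f u, f v) \<in> (dedges Y)\<^sup>*"
  using assms(2)
proof (induction rule: rtrancl_induct)
  case base then show ?case by simp
next
  case (step y z)
  have "(f y, f z) \<in> dedges Y"
    using step(2) assms(1) by (fastforce simp: dedges_def)
  then show ?case using step(3) by (meson rtrancl.rtrancl_into_rtrancl)
qed

definition ends :: "nat \<times> 's \<times> nat \<Rightarrow> nat set" where
  "ends e = {fst e, snd (snd e)}"

lemma parent:
  assumes conn: "\<forall>u \<in> verts X. \<forall>v \<in> verts X. (u, v) \<in> (uedges X)\<^sup>*" and r: "r \<in> verts X"
  shows "\<exists>p. inj_on p (verts X - {r}) \<and> (\<forall>v \<in> verts X - {r}. p v \<in> arcs X \<and> v \<in> ends (p v)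
              \<and> fst (p v) \<noteq> snd (snd (p v)))"
proof -
  define R where "R = uedges X"
  define d where "d v = (LEAST n. (v, r) \<in> R ^^ n)" for v
  define q where "q v = (SOME w. (v, w) \<in> R \<and> (w, r) \<in> R ^^ (d v - 1))" for v
  have qprop: "(v, q v) \<in> R \<and> d (q v) < d v" if v: "v \<in> verts X - {r}" for v
  proof -
    have "(v, r) \<in> R\<^sup>*" using conn v r R_def by auto
    then obtain n where "(v, r) \<in> R ^^ n" using rtrancl_power by blast
    then have dv: "(v, r) \<in> R ^^ d v" unfolding d_def by (rule LeastI)
    have "d v \<noteq> 0"
    proof
      assume "d v = 0" with dv have "v = r" by simp
      with v show False by simp
    qed
    then obtain m where m: "d v = Suc m" by (cases "d v") auto
    then obtain w where "(v, w) \<in> R \<and> (w, r) \<in> R ^^ (d v - 1)"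
      using dv relpow_Suc_D2 by (metis diff_Suc_1)
    then have qv: "(v, q v) \<in> R \<and> (q v, r) \<in> R ^^ (d v - 1)"
      unfolding q_def by (rule someI)
    then have "d (q v) \<le> d v - 1" unfolding d_def by (rule Least_le[OF conjunct2])
    with m qv show ?thesis by auto
  qed
  define p where "p v = (SOME e. e \<in> arcs X \<and> ends e = {v, q v})" for v
  have pprop: "p v \<in> arcs X \<and> ends (p v) = {v, q v}" if v: "v \<in> verts X - {r}" for v
  proof -
    have "(v, q v) \<in> R" using qprop v by blast
    then obtain a where "(v, a, q v) \<in> arcs X \<or> (q v, a, v) \<in> arcs X"
      unfolding R_def uedges_def dedges_def by auto
    then have "\<exists>e. e \<in> arcs X \<and> ends e = {v, q v}"
      by (auto simp: ends_def)
    then show ?thesis unfolding p_def by (rule someI_ex)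
  qed
  have "inj_on p (verts X - {r})"
  proof (rule inj_onI)
    fix v w assume v: "v \<in> verts X - {r}" and w: "w \<in> verts X - {r}" and e: "p v = p w"
    have "{v, q v} = {w, q w}" using pprop[OF v] pprop[OF w] e by simp
    moreover have "d (q v) < d v" "d (q w) < d w" using qprop v w by auto
    ultimately show "v = w" by (metis doubleton_eq_iff less_asym)
  qed
  moreover have "\<forall>v \<in> verts X - {r}. p v \<in> arcs X \<and> v \<in> ends (p v) \<and> fst (p v) \<noteq> snd (snd (p v))"
  proof
    fix v assume v: "v \<in> verts X - {r}"
    have "v \<noteq> q v" using qprop[OF v] by auto
    then show "p v \<in> arcs X \<and> v \<in> ends (p v) \<and> fst (p v) \<noteq> snd (snd (p v))"
      using pprop[OF v] by (auto simp: ends_def doubleton_eq_iff)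
  qed
  ultimately show ?thesis by blast
qed


lemma st_basic:
  assumes "sigma_tree Sig X"
  shows "finite (verts X)" "finite (arcs X)" "st X \<in> verts X" "en X \<in> verts X"
    "card (arcs X) + 1 = card (verts X)"
    "\<forall>u \<in> verts X. \<forall>v \<in> verts X. (u, v) \<in> (uedges X)\<^sup>*"
    "(u, a, v) \<in> arcs X \<Longrightarrow> u \<in> verts X \<and> a \<in> Sig \<and> v \<in> verts X"
    "(st X, en X) \<in> (dedges X)\<^sup>*"
  using assms unfolding sigma_tree_def by auto

lemma parent_img:
  assumes "p ` A \<subseteq> B" "inj_on p A" "finite B"
  shows "card A \<le> card B"
  using assms by (metis card_image card_mono)

lemma no_loop:
  assumes X: "sigma_tree Sig X"
  shows "(u, a, u) \<notin> arcs X"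
proof
  assume l: "(u, a, u) \<in> arcs X"
  obtain p where p: "inj_on p (verts X - {st X})"
    "\<forall>v \<in> verts X - {st X}. p v \<in> arcs X \<and> v \<in> ends (p v) \<and> fst (p v) \<noteq> snd (snd (p v))"
    using parent[OF st_basic(6)[OF X] st_basic(3)[OF X]] by blast
  have "p ` (verts X - {st X}) \<subseteq> arcs X - {(u, a, u)}" using p(2) by force
  then have "card (verts X - {st X}) \<le> card (arcs X - {(u, a, u)})"
    using p(1) st_basic[OF X] by (intro parent_img) auto
  moreover have "card (arcs X) > 0" using l st_basic(2)[OF X] by (auto simp: card_gt_0_iff)
  ultimately show False using st_basic[OF X] l by (simp add: card_Diff_singleton)
qed

lemma subtree_card:
  assumes X: "sigma_tree Sig X" and sub: "verts R \<subseteq> verts X" "arcs R \<subseteq> arcs X"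
    and ends: "\<forall>(u, a, v) \<in> arcs R. u \<in> verts R \<and> v \<in> verts R"
    and ne: "r \<in> verts R"
    and conn: "\<forall>u \<in> verts R. \<forall>v \<in> verts R. (u, v) \<in> (uedges R)\<^sup>*"
  shows "card (arcs R) + 1 = card (verts R)"
proof -
  have fX: "finite (verts X)" "finite (arcs X)" using st_basic[OF X] by auto
  then have fR: "finite (verts R)" "finite (arcs R)" using sub finite_subset by auto
  obtain p where p: "inj_on p (verts X - {r})"
    "\<forall>v \<in> verts X - {r}. p v \<in> arcs X \<and> v \<in> ends (p v) \<and> fst (p v) \<noteq> snd (snd (p v))"
    using parent[OF st_basic(6)[OF X]] ne sub by blast
  have "p ` (verts X - verts R) \<subseteq> arcs X - arcs R"
  proof
    fix e assume "e \<in> p ` (verts X - verts R)"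
    then obtain v where v: "v \<in> verts X" "v \<notin> verts R" "e = p v" by auto
    then have "v \<noteq> r" using ne by auto
    then have "e \<in> arcs X" "v \<in> ends e" using p(2) v by auto
    moreover have "e \<notin> arcs R"
    proof
      assume "e \<in> arcs R"
      then have "ends e \<subseteq> verts R" using ends by (auto simp: ends_def)
      with \<open>v \<in> ends e\<close> v show False by auto
    qed
    ultimately show "e \<in> arcs X - arcs R" by auto
  qed
  moreover have "inj_on p (verts X - verts R)" by (rule inj_on_subset[OF p(1)]) (use ne in auto)
  ultimately have "card (verts X - verts R) \<le> card (arcs X - arcs R)"
    using fX by (intro parent_img) auto
  then have 1: "card (verts X) - card (verts R) \<le> card (arcs X) - card (arcs R)"
    using sub fR by (simp add: card_Diff_subset)
  have "card (arcs R) \<le> card (arcs X)" using sub fX by (simp add: card_mono)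
  moreover have "card (verts R) \<le> card (verts X)" using sub fX by (simp add: card_mono)
  ultimately have le1: "card (arcs R) + 1 \<le> card (verts R)" using 1 st_basic(5)[OF X] by linarith
  obtain q where q: "inj_on q (verts R - {r})"
    "\<forall>v \<in> verts R - {r}. q v \<in> arcs R \<and> v \<in> ends (q v) \<and> fst (q v) \<noteq> snd (snd (q v))"
    using parent[OF conn ne] by blast
  have "card (verts R - {r}) \<le> card (arcs R)"
    using q fR by (intro parent_img[of q]) auto
  then have "card (verts R) \<le> card (arcs R) + 1" using ne fR by (simp add: card_Diff_singleton)
  with le1 show ?thesis by linarith
qed


lemma morphism_id: "morphism X X id"
  by (auto simp: morphism_def)

lemma iso_of_bij:
  assumes X: "sigma_tree Sig X" and Y: "sigma_tree Sig Y" and m: "morphism X Y f"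
    and b: "bij_betw f (verts X) (verts Y)"
  shows "iso X Y f"
proof -
  have inj: "inj_on (emap f) (arcs X)"
  proof (rule inj_onI)
    fix e1 e2 assume e: "e1 \<in> arcs X" "e2 \<in> arcs X" "emap f e1 = emap f e2"
    obtain u1 a1 v1 where e1: "e1 = (u1, a1, v1)" by (cases e1) auto
    obtain u2 a2 v2 where e2: "e2 = (u2, a2, v2)" by (cases e2) auto
    have "u1 \<in> verts X" "v1 \<in> verts X" "u2 \<in> verts X" "v2 \<in> verts X"
      using st_basic(7)[OF X] e e1 e2 by auto
    then show "e1 = e2" using e e1 e2 b by (auto simp: bij_betw_def inj_on_def)
  qed
  have sub: "emap f ` arcs X \<subseteq> arcs Y" using m by (auto simp: morphism_def)
  have "card (emap f ` arcs X) = card (arcs Y)"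
    using card_image[OF inj] st_basic(5)[OF X] st_basic(5)[OF Y] bij_betw_same_card[OF b] by simp
  then have "emap f ` arcs X = arcs Y"
    using sub st_basic(2)[OF Y] by (simp add: card_subset_eq)
  then show ?thesis using inj m b by (auto simp: iso_def bij_betw_def)
qed

lemma iso_inv:
  assumes X: "sigma_tree Sig X" and Y: "sigma_tree Sig Y" and i: "iso X Y f"
  shows "\<exists>g. morphism Y X g \<and> bij_betw g (verts Y) (verts X) \<and> (\<forall>v\<in>verts X. g (f v) = v)
           \<and> (\<forall>w\<in>verts Y. f (g w) = w)"
proof -
  define g where "g = inv_into (verts X) f"
  have b: "bij_betw f (verts X) (verts Y)" and be: "bij_betw (emap f) (arcs X) (arcs Y)"
    and m: "morphism X Y f" using i by (auto simp: iso_def)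
  have gb: "bij_betw g (verts Y) (verts X)" unfolding g_def by (rule bij_betw_inv_into[OF b])
  have gf: "\<forall>v\<in>verts X. g (f v) = v" using b unfolding g_def
    by (simp add: bij_betw_def)
  have fg: "\<forall>w\<in>verts Y. f (g w) = w" using b unfolding g_def
    by (simp add: bij_betw_def f_inv_into_f)
  have "morphism Y X g"
    unfolding morphism_def
  proof (intro conjI ballI)
    fix v assume "v \<in> verts Y" then show "g v \<in> verts X" using gb by (auto simp: bij_betw_def)
  next
    fix e assume "e \<in> arcs Y"
    then obtain e' where e': "e' \<in> arcs X" "e = emap f e'" using be unfolding bij_betw_def by blast
    obtain u a v where "e' = (u, a, v)" by (cases e') auto
    moreover have "u \<in> verts X" "v \<in> verts X" using st_basic(7)[OF X] e' calculation by auto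
    ultimately show "emap g e \<in> arcs X" using e' gf by auto
  next
    show "g (st Y) = st X" using m gf st_basic(3)[OF X] by (auto simp: morphism_def)
  next
    show "g (en Y) = en X" using m gf st_basic(4)[OF X] by (auto simp: morphism_def)
  qed
  then show ?thesis using gb gf fg by blast
qed

lemma isomorphic_refl: "isomorphic X X"
  unfolding isomorphic_def iso_def by (rule exI[of _ id]) (simp add: morphism_id)

lemma isomorphic_sym:
  assumes "sigma_tree Sig X" "sigma_tree Sig Y" "isomorphic X Y"
  shows "isomorphic Y X"
  using iso_inv[OF assms(1,2)] iso_of_bij[OF assms(2,1)] assms(3)
  unfolding isomorphic_def by metis

lemma isomorphic_trans:
  assumes "sigma_tree Sig X" "sigma_tree Sig Y" "sigma_tree Sig Z" "isomorphic X Y" "isomorphic Y Z"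
  shows "isomorphic X Z"
proof -
  obtain f g where "iso X Y f" "iso Y Z g" using assms unfolding isomorphic_def by auto
  then have "morphism X Z (g \<circ> f)" "bij_betw (g \<circ> f) (verts X) (verts Z)"
    by (auto simp: iso_def intro: morphism_comp bij_betw_trans)
  then show ?thesis using iso_of_bij[OF assms(1,3)] unfolding isomorphic_def by blast
qed

lemma morphism_pow: "morphism P P h \<Longrightarrow> morphism P P (h ^^ n)"
  by (induction n) (auto intro: morphism_comp morphism_id)

lemma endo_inj:
  assumes fin: "finite (verts P)" and pr: "pruned P" and m: "morphism P P h"
  shows "inj_on h (verts P)"
proof -
  let ?V = "verts P"
  define F where "F n = (\<lambda>v. (v, (h ^^ n) v)) ` ?V" for n
  have mp: "\<And>n. morphism P P (h ^^ n)" using m by (rule morphism_pow)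
  have "range F \<subseteq> Pow (?V \<times> ?V)" using mp by (auto simp: F_def morphism_def)
  moreover have "finite (Pow (?V \<times> ?V))" using fin by simp
  ultimately have "finite (range F)" by (rule finite_subset)
  then have "\<not> inj F" using infinite_UNIV_nat finite_imageD by blast
  then obtain i j where ij0: "i \<noteq> j" "F i = F j" unfolding inj_def by blast
  have pw: "\<forall>v\<in>?V. (h ^^ i) v = (h ^^ j) v"
  proof
    fix v assume v: "v \<in> ?V"
    then have "(v, (h ^^ i) v) \<in> F j" using ij0 by (auto simp: F_def)
    then show "(h ^^ i) v = (h ^^ j) v" by (auto simp: F_def)
  qed
  have "\<exists>i j. i < j \<and> (\<forall>v\<in>?V. (h ^^ i) v = (h ^^ j) v)"
  proof (cases "i < j")
    case True with pw show ?thesis by blast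
  next
    case False then have "j < i" using ij0 by simp
    with pw show ?thesis by (intro exI[of _ j] exI[of _ i]) auto
  qed
  then obtain i j where ij: "i < j" "\<forall>v\<in>?V. (h ^^ i) v = (h ^^ j) v" by blast
  define p where "p = j - i"
  have p1: "p \<ge> 1" using ij p_def by auto
  have base: "(h ^^ (n + p)) v = (h ^^ n) v" if "n \<ge> i" "v \<in> ?V" for n v
  proof -
    have "n + p = (n - i) + j" "n = (n - i) + i" using that ij p_def by auto
    then show ?thesis using ij(2) that by (metis comp_apply funpow_add)
  qed
  have rep: "(h ^^ (n + c * p)) v = (h ^^ n) v" if "n \<ge> i" "v \<in> ?V" for n v c
  proof (induction c)
    case 0 then show ?case by simp
  next
    case (Suc c)
    have "(h ^^ (n + Suc c * p)) v = (h ^^ ((n + c * p) + p)) v" by (simp add: algebra_simps)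
    also have "\<dots> = (h ^^ (n + c * p)) v" using that by (intro base) auto
    finally show ?case using Suc by simp
  qed
  define k where "k = Suc i * p"
  have "Suc i * 1 \<le> Suc i * p" using p1 by (rule mult_le_mono2)
  then have ki: "k \<ge> i" "k \<ge> 1" unfolding k_def by auto
  have "(h ^^ k) ((h ^^ k) v) = (h ^^ k) v" if "v \<in> ?V" for v
  proof -
    have "(h ^^ k) ((h ^^ k) v) = (h ^^ (k + k)) v" by (simp add: funpow_add)
    also have "\<dots> = (h ^^ k) v" using rep[OF ki(1) that, of "Suc i"] k_def by simp
    finally show ?thesis .
  qed
  then have "retraction P (h ^^ k)" using mp by (auto simp: retraction_def)
  then have idk: "\<forall>v\<in>?V. (h ^^ k) v = v" using pr by (auto simp: pruned_def)
  show ?thesis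
  proof (rule inj_onI)
    fix v w assume vw: "v \<in> ?V" "w \<in> ?V" "h v = h w"
    have k: "k = Suc (k - 1)" using ki by simp
    have hk: "(h ^^ k) x = (h ^^ (k - 1)) (h x)" for x using k by (metis comp_apply funpow_Suc_right)
    have "(h ^^ k) v = (h ^^ k) w" using vw(3) hk by simp
    then show "v = w" using idk vw by auto
  qed
qed

lemma endo_bij:
  assumes fin: "finite (verts P)" and pr: "pruned P" and m: "morphism P P h"
  shows "h ` verts P = verts P"
proof -
  have "h ` verts P \<subseteq> verts P" using m by (auto simp: morphism_def)
  moreover have "card (h ` verts P) = card (verts P)" using endo_inj[OF assms] by (simp add: card_image)
  ultimately show ?thesis using fin by (simp add: card_subset_eq)
qed

lemma iso_of_homeq:
  assumes P: "sigma_tree Sig P" and Q: "sigma_tree Sig Q" and pP: "pruned P" and pQ: "pruned Q"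
    and f: "morphism P Q f" and g: "morphism Q P g"
  shows "isomorphic P Q"
proof -
  have "inj_on (g \<circ> f) (verts P)"
    using endo_inj[OF st_basic(1)[OF P] pP morphism_comp[OF f g]] .
  then have inj: "inj_on f (verts P)" using inj_on_imageI2 by blast
  have "(f \<circ> g) ` verts Q = verts Q"
    using endo_bij[OF st_basic(1)[OF Q] pQ morphism_comp[OF g f]] .
  moreover have "g ` verts Q \<subseteq> verts P" "f ` verts P \<subseteq> verts Q" using f g by (auto simp: morphism_def)
  ultimately have "f ` verts P = verts Q" by (metis image_comp image_mono subset_antisym)
  then have "bij_betw f (verts P) (verts Q)" using inj by (simp add: bij_betw_def)
  then show ?thesis using iso_of_bij[OF P Q f] unfolding isomorphic_def by blast
qed

lemma pruned_iso:
  assumes P: "sigma_tree Sig P" and Y: "sigma_tree Sig Y" and pP: "pruned P" and i: "isomorphic P Y"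
  shows "pruned Y"
  unfolding pruned_def
proof (intro allI impI ballI)
  fix r w assume r: "retraction Y r" and w: "w \<in> verts Y"
  obtain f where f: "iso P Y f" using i unfolding isomorphic_def by blast
  obtain g where g: "morphism Y P g" "\<forall>v\<in>verts P. g (f v) = v" "\<forall>w\<in>verts Y. f (g w) = w"
    using iso_inv[OF P Y f] by blast
  have mf: "morphism P Y f" using f by (simp add: iso_def)
  have mr: "morphism Y Y r" using r by (simp add: retraction_def)
  have inj: "inj_on (g \<circ> r \<circ> f) (verts P)"
    using endo_inj[OF st_basic(1)[OF P] pP morphism_comp[OF morphism_comp[OF mf mr] g(1)]]
    by (simp add: comp_assoc)
  define v where "v = g w"
  have v: "v \<in> verts P" "f v = w" using g w v_def by (auto simp: morphism_def)
  define v' where "v' = g (r (f v))"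
  have rfv: "r (f v) \<in> verts Y" using mr v mf by (auto simp: morphism_def)
  have v': "v' \<in> verts P" using g(1) rfv v'_def by (auto simp: morphism_def)
  have "(g \<circ> r \<circ> f) v' = (g \<circ> r \<circ> f) v"
    using g(3) rfv r v w by (auto simp: v'_def retraction_def)
  then have "v' = v" using inj_onD[OF inj _ v'(1) v(1)] by blast
  then have "f (g (r (f v))) = f v" using v'_def by simp
  then show "r w = w" using g(3) rfv v by simp
qed


lemma img_simps[simp]: "verts (img X f) = f ` verts X" "arcs (img X f) = emap f ` arcs X"
  "st (img X f) = f (st X)" "en (img X f) = f (en X)"
  by (auto simp: img_def)

lemma retr_morphs:
  assumes "retraction X f"
  shows "morphism X (img X f) f" "morphism (img X f) X id"
  using assms by (auto simp: retraction_def morphism_def)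

lemma retr_fix:
  assumes "retraction X f" "w \<in> verts (img X f)"
  shows "f w = w"
  using assms by (auto simp: retraction_def)

lemma retraction_comp:
  assumes f: "retraction X f" and r: "retraction (img X f) r"
  shows "retraction X (r \<circ> f)"
proof -
  have m: "morphism X X (id \<circ> (r \<circ> f))"
    using retr_morphs[OF f] r by (intro morphism_comp) (auto simp: retraction_def)
  have "r (f (r (f v))) = r (f v)" if v: "v \<in> verts X" for v
  proof -
    have fv: "f v \<in> verts (img X f)" using v by simp
    then have rfv: "r (f v) \<in> verts (img X f)" using r by (auto simp: retraction_def morphism_def)
    then have "f (r (f v)) = r (f v)" by (rule retr_fix[OF f])
    then show ?thesis using r fv by (auto simp: retraction_def)
  qed
  then show ?thesis using m by (auto simp: retraction_def)
qed

lemma img_sigma: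
  assumes X: "sigma_tree Sig X" and f: "retraction X f"
  shows "sigma_tree Sig (img X f)"
proof -
  have m: "morphism X X f" using f by (simp add: retraction_def)
  have ea: "\<forall>e\<in>arcs X. emap f e \<in> arcs (img X f)" by simp
  have sub: "verts (img X f) \<subseteq> verts X" "arcs (img X f) \<subseteq> arcs X"
    using m by (auto simp: morphism_def)
  have ends: "\<forall>(u, a, v) \<in> arcs (img X f). u \<in> verts (img X f) \<and> a \<in> Sig \<and> v \<in> verts (img X f)"
    using st_basic(7)[OF X] by auto
  have conn: "\<forall>u \<in> verts (img X f). \<forall>v \<in> verts (img X f). (u, v) \<in> (uedges (img X f))\<^sup>*"
    using uedges_map[OF ea] st_basic(6)[OF X] by auto
  have card: "card (arcs (img X f)) + 1 = card (verts (img X f))"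
    by (rule subtree_card[OF X sub _ _ conn, of "f (st X)"]) (use ends st_basic(3)[OF X] in auto)
  have "(st (img X f), en (img X f)) \<in> (dedges (img X f))\<^sup>*"
    using dedges_map[OF ea st_basic(8)[OF X]] by simp
  then show ?thesis unfolding sigma_tree_def using st_basic(1,2,3,4)[OF X] ends conn card by auto
qed

lemma prune_ex:
  assumes Z: "sigma_tree Sig Z"
  shows "\<exists>R. retract_of R Z \<and> pruned R"
proof -
  have "retraction Z id" using morphism_id by (auto simp: retraction_def)
  then obtain f where f: "retraction Z f"
    and min: "\<forall>g. retraction Z g \<longrightarrow> card (f ` verts Z) \<le> card (g ` verts Z)"
    using ex_has_least_nat[of "retraction Z" id "\<lambda>g. card (g ` verts Z)"] by blast
  have "pruned (img Z f)"
    unfolding pruned_def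
  proof (intro allI impI ballI, rule ccontr)
    fix r v assume r: "retraction (img Z f) r" and v: "v \<in> verts (img Z f)" and ne: "r v \<noteq> v"
    have sub: "r ` (f ` verts Z) \<subseteq> f ` verts Z" using r by (auto simp: retraction_def morphism_def)
    have "v \<notin> r ` (f ` verts Z)"
    proof
      assume "v \<in> r ` (f ` verts Z)"
      then obtain w where "w \<in> f ` verts Z" "v = r w" by auto
      then show False using r ne by (auto simp: retraction_def)
    qed
    then have "r ` (f ` verts Z) \<subset> f ` verts Z" using sub v by auto
    then have "card ((r \<circ> f) ` verts Z) < card (f ` verts Z)"
      using st_basic(1)[OF Z] psubset_card_mono[of "f ` verts Z" "r ` f ` verts Z"]
      by (simp add: image_comp)
    moreover have "retraction Z (r \<circ> f)" by (rule retraction_comp[OF f r])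
    ultimately show False using min by fastforce
  qed
  then show ?thesis using f unfolding retract_of_def by blast
qed

definition Hom :: "'s stree \<Rightarrow> 's stree \<Rightarrow> bool" where
  "Hom X Y \<longleftrightarrow> (\<exists>f. morphism X Y f)"

lemma Hom_trans: "Hom X Y \<Longrightarrow> Hom Y Z \<Longrightarrow> Hom X Z"
  unfolding Hom_def by (blast intro: morphism_comp)

lemma Hom_refl: "Hom X X"
  unfolding Hom_def using morphism_id by blast

lemma prune_props:
  assumes Z: "sigma_tree Sig Z"
  shows "sigma_tree Sig (prune Z)" "pruned (prune Z)" "Hom Z (prune Z)" "Hom (prune Z) Z"
    "st Z = en Z \<Longrightarrow> st (prune Z) = en (prune Z)"
proof -
  have "retract_of (prune Z) Z \<and> pruned (prune Z)"
    unfolding prune_def by (rule someI_ex[OF prune_ex[OF Z]])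
  then obtain f where f: "retraction Z f" "prune Z = img Z f" and p: "pruned (prune Z)"
    unfolding retract_of_def by blast
  show "sigma_tree Sig (prune Z)" using img_sigma[OF Z f(1)] f(2) by simp
  show "pruned (prune Z)" by (rule p)
  show "Hom Z (prune Z)" "Hom (prune Z) Z" using retr_morphs[OF f(1)] f(2) unfolding Hom_def by auto
  show "st Z = en Z \<Longrightarrow> st (prune Z) = en (prune Z)" using f(2) by simp
qed

lemma isomorphic_Hom:
  assumes "sigma_tree Sig X" "sigma_tree Sig Y" "isomorphic X Y"
  shows "Hom X Y" "Hom Y X"
  using assms isomorphic_sym[OF assms] unfolding Hom_def isomorphic_def iso_def by auto


definition inr :: "'s stree \<Rightarrow> 's stree \<Rightarrow> nat \<Rightarrow> nat" where
  "inr X Y = (\<lambda>v. if v = st Y then 2 * en X else 2 * v + 1)"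

definition glue :: "(nat \<Rightarrow> nat) \<Rightarrow> (nat \<Rightarrow> nat) \<Rightarrow> nat \<Rightarrow> nat" where
  "glue f g = (\<lambda>w. if even w then f (w div 2) else g ((w - 1) div 2))"

lemma tprod_simps[simp]:
  "verts (tprod X Y) = (\<lambda>v. 2 * v) ` verts X \<union> inr X Y ` verts Y"
  "arcs (tprod X Y) = emap (\<lambda>v. 2 * v) ` arcs X \<union> emap (inr X Y) ` arcs Y"
  "st (tprod X Y) = 2 * st X" "en (tprod X Y) = inr X Y (en Y)"
  by (auto simp: tprod_def inr_def Let_def)

lemma inr_st[simp]: "inr X Y (st Y) = 2 * en X"
  by (simp add: inr_def)

lemma pmor_inl: "pmor X (tprod X Y) (\<lambda>v. 2 * v)"
  by (auto simp: pmor_def)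

lemma pmor_inr: "pmor Y (tprod X Y) (inr X Y)"
  by (auto simp: pmor_def)

lemma glue_inl[simp]: "glue f g (2 * v) = f v"
  by (simp add: glue_def)

lemma glue_inr:
  assumes "f (en X) = g (st Y)"
  shows "glue f g (inr X Y v) = g v"
  using assms by (auto simp: glue_def inr_def)

lemma glue_pmor:
  assumes f: "pmor X W f" and g: "pmor Y W g" and c: "f (en X) = g (st Y)"
  shows "pmor (tprod X Y) W (glue f g)"
proof -
  have a: "glue f g \<circ> (\<lambda>v. 2 * v) = f" by (auto simp: fun_eq_iff)
  have b: "glue f g \<circ> inr X Y = g" using glue_inr[of f X g Y, OF c] by (auto simp: fun_eq_iff)
  have "emap (glue f g) (emap (\<lambda>v. 2 * v) e) = emap f e" for e
    using a by (metis comp_apply emap_comp)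
  moreover have "emap (glue f g) (emap (inr X Y) e) = emap g e" for e
    using b by (metis comp_apply emap_comp)
  ultimately show ?thesis using f g glue_inr[of f X g Y, OF c] by (auto simp: pmor_def)
qed

lemma glue_morphism:
  assumes f: "pmor X W f" and g: "pmor Y W g" and c: "f (en X) = g (st Y)"
    and s: "f (st X) = st W" and e: "g (en Y) = en W"
  shows "morphism (tprod X Y) W (glue f g)"
  using glue_pmor[OF f g c] s e glue_inr[of f X g Y, OF c] by (simp add: morphism_pmor)

lemma pmor_of_morphism: "morphism X Y f \<Longrightarrow> pmor X Y f"
  by (simp add: morphism_pmor)

lemma tprod_mono:
  assumes "Hom X X'" "Hom Y Y'"
  shows "Hom (tprod X Y) (tprod X' Y')"
proof -
  obtain f g where f: "morphism X X' f" and g: "morphism Y Y' g" using assms unfolding Hom_def by blast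
  have "morphism (tprod X Y) (tprod X' Y') (glue ((\<lambda>v. 2 * v) \<circ> f) (inr X' Y' \<circ> g))"
    using f g by (intro glue_morphism pmor_comp[OF pmor_of_morphism pmor_inl]
        pmor_comp[OF pmor_of_morphism pmor_inr]) (auto simp: morphism_def)
  then show ?thesis unfolding Hom_def by blast
qed

lemma tprod_assoc1: "Hom (tprod (tprod X Y) Z) (tprod X (tprod Y Z))"
proof -
  let ?W = "tprod X (tprod Y Z)"
  let ?i1 = "\<lambda>v::nat. 2 * v"
  let ?g1 = "inr X (tprod Y Z) \<circ> (\<lambda>v. 2 * v)"
  let ?G1 = "glue ?i1 ?g1"
  let ?g2 = "inr X (tprod Y Z) \<circ> inr Y Z"
  have p1: "pmor X ?W ?i1" by (rule pmor_inl)
  have p2: "pmor Y ?W ?g1" by (rule pmor_comp[OF pmor_inl pmor_inr])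
  have c1: "?i1 (en X) = ?g1 (st Y)" by (simp add: inr_def)
  have pG: "pmor (tprod X Y) ?W ?G1" by (rule glue_pmor[OF p1 p2 c1])
  have p3: "pmor Z ?W ?g2" by (rule pmor_comp[OF pmor_inr pmor_inr])
  have "morphism (tprod (tprod X Y) Z) ?W (glue ?G1 ?g2)"
    by (rule glue_morphism[OF pG p3]) (simp_all add: glue_inr[of ?i1 X ?g1 Y, OF c1])
  then show ?thesis unfolding Hom_def by blast
qed

lemma tprod_assoc2: "Hom (tprod X (tprod Y Z)) (tprod (tprod X Y) Z)"
proof -
  let ?W = "tprod (tprod X Y) Z"
  let ?f1 = "(\<lambda>v::nat. 2 * v) \<circ> inr X Y"
  let ?g1 = "inr (tprod X Y) Z"
  let ?G1 = "glue ?f1 ?g1"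
  let ?i = "(\<lambda>v::nat. 2 * v) \<circ> (\<lambda>v::nat. 2 * v)"
  have p1: "pmor Y ?W ?f1" by (rule pmor_comp[OF pmor_inr pmor_inl])
  have p2: "pmor Z ?W ?g1" by (rule pmor_inr)
  have c1: "?f1 (en Y) = ?g1 (st Z)" by (simp add: inr_def)
  have pG: "pmor (tprod Y Z) ?W ?G1" by (rule glue_pmor[OF p1 p2 c1])
  have p0: "pmor X ?W ?i" by (rule pmor_comp[OF pmor_inl pmor_inl])
  have "morphism (tprod X (tprod Y Z)) ?W (glue ?i ?G1)"
    by (rule glue_morphism[OF p0 pG]) (simp_all add: glue_inr[of ?f1 Y ?g1 Z, OF c1])
  then show ?thesis unfolding Hom_def by blast
qed

lemma tprod_comm:
  assumes "st X = en X" "st Y = en Y"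
  shows "Hom (tprod X Y) (tprod Y X)"
proof -
  have "morphism (tprod X Y) (tprod Y X) (glue (inr Y X) (\<lambda>v. 2 * v))"
    by (rule glue_morphism[OF pmor_inr pmor_inl]) (use assms in \<open>simp_all add: inr_def\<close>)
  then show ?thesis unfolding Hom_def by blast
qed

lemma tprod_st_en: "st X = en X \<Longrightarrow> st Y = en Y \<Longrightarrow> st (tprod X Y) = en (tprod X Y)"
  by (simp add: inr_def)

lemma inr_even: "2 * u = inr X Y v \<Longrightarrow> v = st Y"
  by (auto simp: inr_def split: if_splits) presburger

lemma inr_inj: "inj (inr X Y)"
  by (auto simp: inj_def inr_def) presburger+

lemma emap_inj: "inj f \<Longrightarrow> inj (emap f)"
  by (auto simp: inj_def emap_def)

lemma tprod_sigma:
  assumes X: "sigma_tree Sig X" and Y: "sigma_tree Sig Y"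
  shows "sigma_tree Sig (tprod X Y)"
proof -
  let ?T = "tprod X Y"
  let ?i = "\<lambda>v::nat. 2 * v"
  let ?j = "inr X Y"
  have ea: "\<forall>e\<in>arcs X. emap ?i e \<in> arcs ?T" and eb: "\<forall>e\<in>arcs Y. emap ?j e \<in> arcs ?T"
    using pmor_inl pmor_inr unfolding pmor_def by blast+
  have fin: "finite (verts ?T)" "finite (arcs ?T)" using st_basic(1,2)[OF X] st_basic(1,2)[OF Y] by auto
  have ends: "\<forall>(u, a, v) \<in> arcs ?T. u \<in> verts ?T \<and> a \<in> Sig \<and> v \<in> verts ?T"
    using st_basic(7)[OF X] st_basic(7)[OF Y] by fastforce
  let ?c = "2 * en X"
  have c: "?c \<in> verts ?T" using st_basic(4)[OF X] by auto
  have toc: "(w, ?c) \<in> (uedges ?T)\<^sup>* \<and> (?c, w) \<in> (uedges ?T)\<^sup>*" if w: "w \<in> verts ?T" for w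
  proof (cases "w \<in> ?i ` verts X")
    case True
    then obtain u where "u \<in> verts X" "w = ?i u" by auto
    then show ?thesis using uedges_map[OF ea] st_basic(6)[OF X] st_basic(4)[OF X] by auto
  next
    case False
    then obtain u where u: "u \<in> verts Y" "w = ?j u" using w by auto
    have "(?j u, ?j (st Y)) \<in> (uedges ?T)\<^sup>*" "(?j (st Y), ?j u) \<in> (uedges ?T)\<^sup>*"
      using uedges_map[OF eb, of u "st Y"] uedges_map[OF eb, of "st Y" u] st_basic(6)[OF Y] st_basic(3)[OF Y] u
      by (simp del: inr_st)+
    then show ?thesis using u by simp
  qed
  have conn: "\<forall>u \<in> verts ?T. \<forall>v \<in> verts ?T. (u, v) \<in> (uedges ?T)\<^sup>*"
    using toc by (meson rtrancl_trans)
  have int: "?i ` verts X \<inter> ?j ` verts Y = {?c}"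
  proof
    show "?i ` verts X \<inter> ?j ` verts Y \<subseteq> {?c}"
      by (auto simp: inr_def split: if_splits) presburger
    show "{?c} \<subseteq> ?i ` verts X \<inter> ?j ` verts Y"
      using st_basic(3,4)[OF X] st_basic(3)[OF Y] inr_st[of X Y, symmetric] by blast
  qed
  have cv: "card (verts ?T) = card (verts X) + card (verts Y) - 1"
  proof -
    have "card (verts ?T) + card {?c} = card (?i ` verts X) + card (?j ` verts Y)"
      using card_Un_Int[of "?i ` verts X" "?j ` verts Y"] st_basic(1)[OF X] st_basic(1)[OF Y] int by simp
    moreover have "card (?i ` verts X) = card (verts X)" by (rule card_image) (auto simp: inj_on_def)
    moreover have "card (?j ` verts Y) = card (verts Y)" by (rule card_image) (rule inj_on_subset[OF inr_inj], simp)
    ultimately show ?thesis by simp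
  qed
  have dis: "emap ?i ` arcs X \<inter> emap ?j ` arcs Y = {}"
  proof (rule ccontr)
    assume "emap ?i ` arcs X \<inter> emap ?j ` arcs Y \<noteq> {}"
    then obtain u a v u' v' where e: "(u, a, v) \<in> arcs X" "(u', a, v') \<in> arcs Y"
      "2 * u = ?j u'" "2 * v = ?j v'" by (auto simp: emap_def) blast
    then have "u' = st Y" "v' = st Y" using inr_even by auto
    then show False using e(2) no_loop[OF Y] by auto
  qed
  have ca: "card (arcs ?T) = card (arcs X) + card (arcs Y)"
  proof -
    have "card (arcs ?T) = card (emap ?i ` arcs X) + card (emap ?j ` arcs Y)"
      using card_Un_disjoint[OF _ _ dis] st_basic(2)[OF X] st_basic(2)[OF Y] by simp
    moreover have "card (emap ?i ` arcs X) = card (arcs X)"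
      by (rule card_image, rule inj_on_subset[OF emap_inj]) (auto simp: inj_def)
    moreover have "card (emap ?j ` arcs Y) = card (arcs Y)"
      by (rule card_image, rule inj_on_subset[OF emap_inj[OF inr_inj]]) simp
    ultimately show ?thesis by simp
  qed
  have card: "card (arcs ?T) + 1 = card (verts ?T)"
    using ca cv st_basic(5)[OF X] st_basic(5)[OF Y] by simp
  have d1: "(?i (st X), ?i (en X)) \<in> (dedges ?T)\<^sup>*"
    using dedges_map[OF ea st_basic(8)[OF X]] .
  have d2: "(?j (st Y), ?j (en Y)) \<in> (dedges ?T)\<^sup>*"
    using dedges_map[OF eb st_basic(8)[OF Y]] .
  have "(st ?T, en ?T) \<in> (dedges ?T)\<^sup>*" using d1 d2 by simp
  moreover have "st ?T \<in> verts ?T" "en ?T \<in> verts ?T" using st_basic(3)[OF X] st_basic(4)[OF Y] by auto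
  ultimately show ?thesis unfolding sigma_tree_def using fin ends conn card by auto
qed

lemma tstar_sigma: "sigma_tree Sig X \<Longrightarrow> sigma_tree Sig (tstar X)"
  by (auto simp: sigma_tree_def tstar_def dedges_def uedges_def)

lemma tplus_sigma: "sigma_tree Sig X \<Longrightarrow> sigma_tree Sig (tplus X)"
  by (auto simp: sigma_tree_def tplus_def dedges_def uedges_def)


declare Hom_trans[trans]

lemma iso_type_mem: "sigma_tree Sig X \<Longrightarrow> X \<in> iso_type Sig X"
  by (simp add: iso_type_def isomorphic_refl)

lemma iso_type_eq:
  assumes X: "sigma_tree Sig X" and Y: "sigma_tree Sig Y" and i: "isomorphic X Y"
  shows "iso_type Sig X = iso_type Sig Y"
proof -
  have i': "isomorphic Y X" by (rule isomorphic_sym[OF X Y i])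
  show ?thesis unfolding iso_type_def
    using isomorphic_trans[OF X Y _ i] isomorphic_trans[OF Y X _ i'] by blast
qed

lemma rep_T1:
  assumes A: "A \<in> T1 Sig"
  shows "sigma_tree Sig (rep A)" "pruned (rep A)" "iso_type Sig (rep A) = A"
proof -
  obtain X where X: "sigma_tree Sig X" "pruned X" "A = iso_type Sig X"
    using A unfolding T1_def by blast
  have "X \<in> A" using X iso_type_mem by blast
  then have r: "rep A \<in> A" unfolding rep_def by (rule someI)
  then show R: "sigma_tree Sig (rep A)" using X by (simp add: iso_type_def)
  have i: "isomorphic X (rep A)" using r X by (simp add: iso_type_def)
  show "pruned (rep A)" by (rule pruned_iso[OF X(1) R X(2) i])
  show "iso_type Sig (rep A) = A" using iso_type_eq[OF X(1) R i] X(3) by simp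
qed

lemma cls_T1: "sigma_tree Sig Z \<Longrightarrow> iso_type Sig (prune Z) \<in> T1 Sig"
  using prune_props[of Sig Z] unfolding T1_def by blast

lemma cls_eq:
  assumes Z: "sigma_tree Sig Z" and W: "sigma_tree Sig W" and h: "Hom Z W" "Hom W Z"
  shows "iso_type Sig (prune Z) = iso_type Sig (prune W)"
proof -
  note pZ = prune_props[OF Z] and pW = prune_props[OF W]
  have "Hom (prune Z) (prune W)" using pZ(4) h(1) pW(3) by (blast intro: Hom_trans)
  moreover have "Hom (prune W) (prune Z)" using pW(4) h(2) pZ(3) by (blast intro: Hom_trans)
  ultimately have "isomorphic (prune Z) (prune W)"
    using iso_of_homeq[OF pZ(1) pW(1) pZ(2) pW(2)] unfolding Hom_def by blast
  then show ?thesis by (rule iso_type_eq[OF pZ(1) pW(1)])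
qed

lemma rep_cls:
  assumes Z: "sigma_tree Sig Z"
  shows "Hom Z (rep (iso_type Sig (prune Z)))" "Hom (rep (iso_type Sig (prune Z))) Z"
    "st Z = en Z \<Longrightarrow> st (rep (iso_type Sig (prune Z))) = en (rep (iso_type Sig (prune Z)))"
proof -
  note pZ = prune_props[OF Z]
  let ?a = "iso_type Sig (prune Z)"
  have "prune Z \<in> ?a" using iso_type_mem[OF pZ(1)] .
  then have r: "rep ?a \<in> ?a" unfolding rep_def by (rule someI)
  then have R: "sigma_tree Sig (rep ?a)" and i: "isomorphic (prune Z) (rep ?a)"
    by (auto simp: iso_type_def)
  note h = isomorphic_Hom[OF pZ(1) R i]
  show "Hom Z (rep ?a)" using pZ(3) h(1) by (rule Hom_trans)
  show "Hom (rep ?a) Z" using h(2) pZ(4) by (rule Hom_trans)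
  assume "st Z = en Z"
  then have "st (prune Z) = en (prune Z)" by (rule pZ(5))
  then show "st (rep ?a) = en (rep ?a)" using i unfolding isomorphic_def iso_def morphism_def by metis
qed

lemma cls_pruned:
  assumes P: "sigma_tree Sig P" and p: "pruned P"
  shows "iso_type Sig (prune P) = iso_type Sig P"
proof -
  note pP = prune_props[OF P]
  have "isomorphic (prune P) P"
    using iso_of_homeq[OF pP(1) P pP(2) p] pP(3,4) unfolding Hom_def by blast
  then show ?thesis by (rule iso_type_eq[OF pP(1) P])
qed

lemma tstar_id: "st X = en X \<Longrightarrow> tstar X = X"
  by (cases X) (simp add: tstar_def)

lemma tplus_id: "st X = en X \<Longrightarrow> tplus X = X"
  by (cases X) (simp add: tplus_def)

lemma tstar_st: "st (tstar X) = en (tstar X)" by (simp add: tstar_def)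
lemma tplus_st: "st (tplus X) = en (tplus X)" by (simp add: tplus_def)

lemma gen_props:
  assumes "a \<in> gen_starplus Sig"
  shows "a \<in> T1 Sig \<and> st (rep a) = en (rep a)"
  using assms
proof induction
  case (gen_star A)
  have S: "sigma_tree Sig (tstar (rep A))" using tstar_sigma rep_T1(1)[OF gen_star] by blast
  show ?case unfolding pstar_def using cls_T1[OF S] rep_cls(3)[OF S tstar_st] by simp
next
  case (gen_plus A)
  have S: "sigma_tree Sig (tplus (rep A))" using tplus_sigma rep_T1(1)[OF gen_plus] by blast
  show ?case unfolding pplus_def using cls_T1[OF S] rep_cls(3)[OF S tplus_st] by simp
next
  case (gen_mult a b)
  have S: "sigma_tree Sig (tprod (rep a) (rep b))"
    using tprod_sigma rep_T1(1) gen_mult by blast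
  have "st (tprod (rep a) (rep b)) = en (tprod (rep a) (rep b))"
    using tprod_st_en gen_mult by blast
  then show ?case unfolding pmult_def using cls_T1[OF S] rep_cls(3)[OF S] by simp
qed

theorem corollary4p6:
  fixes Sig :: "'s set"
  shows "(\<forall>A \<in> T1 Sig. \<forall>B \<in> T1 Sig. pmult Sig A B \<in> T1 Sig \<and> pplus Sig A \<in> T1 Sig \<and> pstar Sig A \<in> T1 Sig)
       \<and> (\<forall>A \<in> T1 Sig. \<forall>B \<in> T1 Sig. \<forall>C \<in> T1 Sig.
            pmult Sig (pmult Sig A B) C = pmult Sig A (pmult Sig B C))
       \<and> (\<forall>A \<in> T1 Sig. pstar Sig (pstar Sig A) = pstar Sig A \<and> pplus Sig (pplus Sig A) = pplus Sig A)
       \<and> (\<forall>a \<in> gen_starplus Sig. \<forall>b \<in> gen_starplus Sig. pmult Sig a b = pmult Sig b a)"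
proof (intro conjI ballI)
  fix A B assume A: "A \<in> T1 Sig" and B: "B \<in> T1 Sig"
  show "pmult Sig A B \<in> T1 Sig" unfolding pmult_def
    by (rule cls_T1, rule tprod_sigma) (use rep_T1(1) A B in auto)
  show "pplus Sig A \<in> T1 Sig" unfolding pplus_def
    by (rule cls_T1, rule tplus_sigma) (use rep_T1(1) A in auto)
  show "pstar Sig A \<in> T1 Sig" unfolding pstar_def
    by (rule cls_T1, rule tstar_sigma) (use rep_T1(1) A in auto)
next
  fix A B C assume A: "A \<in> T1 Sig" and B: "B \<in> T1 Sig" and C: "C \<in> T1 Sig"
  let ?a = "rep A" and ?b = "rep B" and ?c = "rep C"
  have a: "sigma_tree Sig ?a" and b: "sigma_tree Sig ?b" and c: "sigma_tree Sig ?c"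
    using rep_T1(1) A B C by auto
  have ab: "sigma_tree Sig (tprod ?a ?b)" and bc: "sigma_tree Sig (tprod ?b ?c)"
    using tprod_sigma a b c by auto
  let ?M = "iso_type Sig (prune (tprod ?a ?b))" and ?N = "iso_type Sig (prune (tprod ?b ?c))"
  have M: "?M \<in> T1 Sig" and N: "?N \<in> T1 Sig" using cls_T1 ab bc by auto
  note hM = rep_cls[OF ab] and hN = rep_cls[OF bc]
  have L: "sigma_tree Sig (tprod (rep ?M) ?c)" using tprod_sigma rep_T1(1)[OF M] c by blast
  have R: "sigma_tree Sig (tprod ?a (rep ?N))" using tprod_sigma rep_T1(1)[OF N] a by blast
  have "Hom (tprod (rep ?M) ?c) (tprod (tprod ?a ?b) ?c)" by (rule tprod_mono[OF hM(2) Hom_refl])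
  also have "Hom (tprod (tprod ?a ?b) ?c) (tprod ?a (tprod ?b ?c))" by (rule tprod_assoc1)
  also have "Hom (tprod ?a (tprod ?b ?c)) (tprod ?a (rep ?N))" by (rule tprod_mono[OF Hom_refl hN(1)])
  finally have h1: "Hom (tprod (rep ?M) ?c) (tprod ?a (rep ?N))" .
  have "Hom (tprod ?a (rep ?N)) (tprod ?a (tprod ?b ?c))" by (rule tprod_mono[OF Hom_refl hN(2)])
  also have "Hom (tprod ?a (tprod ?b ?c)) (tprod (tprod ?a ?b) ?c)" by (rule tprod_assoc2)
  also have "Hom (tprod (tprod ?a ?b) ?c) (tprod (rep ?M) ?c)" by (rule tprod_mono[OF hM(1) Hom_refl])
  finally have h2: "Hom (tprod ?a (rep ?N)) (tprod (rep ?M) ?c)" .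
  show "pmult Sig (pmult Sig A B) C = pmult Sig A (pmult Sig B C)"
    unfolding pmult_def using cls_eq[OF L R h1 h2] by simp
next
  fix A assume A: "A \<in> T1 Sig"
  have S1: "sigma_tree Sig (tstar (rep A))" using tstar_sigma rep_T1(1)[OF A] by blast
  let ?s = "iso_type Sig (prune (tstar (rep A)))"
  have s: "?s \<in> T1 Sig" by (rule cls_T1[OF S1])
  have "st (rep ?s) = en (rep ?s)" using rep_cls(3)[OF S1 tstar_st] .
  then have "pstar Sig ?s = iso_type Sig (prune (rep ?s))" by (simp add: pstar_def tstar_id)
  also have "\<dots> = iso_type Sig (rep ?s)" using cls_pruned rep_T1(1,2)[OF s] by blast
  also have "\<dots> = ?s" using rep_T1(3)[OF s] .
  finally show "pstar Sig (pstar Sig A) = pstar Sig A" unfolding pstar_def[of Sig A] .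
  have S2: "sigma_tree Sig (tplus (rep A))" using tplus_sigma rep_T1(1)[OF A] by blast
  let ?p = "iso_type Sig (prune (tplus (rep A)))"
  have p: "?p \<in> T1 Sig" by (rule cls_T1[OF S2])
  have "st (rep ?p) = en (rep ?p)" using rep_cls(3)[OF S2 tplus_st] .
  then have "pplus Sig ?p = iso_type Sig (prune (rep ?p))" by (simp add: pplus_def tplus_id)
  also have "\<dots> = iso_type Sig (rep ?p)" using cls_pruned rep_T1(1,2)[OF p] by blast
  also have "\<dots> = ?p" using rep_T1(3)[OF p] .
  finally show "pplus Sig (pplus Sig A) = pplus Sig A" unfolding pplus_def[of Sig A] .
next
  fix a b assume a: "a \<in> gen_starplus Sig" and b: "b \<in> gen_starplus Sig"
  note ga = gen_props[OF a] and gb = gen_props[OF b]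
  have x: "sigma_tree Sig (rep a)" and y: "sigma_tree Sig (rep b)" using rep_T1(1) ga gb by auto
  show "pmult Sig a b = pmult Sig b a" unfolding pmult_def
    by (rule cls_eq[OF tprod_sigma[OF x y] tprod_sigma[OF y x]])
      (use tprod_comm ga gb in auto)
qed

end
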